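(* Let $\mathfrak{e}_1$, $\mathfrak{e}_2$, $\mathfrak{e}_3$ be the consecutive positively oriented edges of an elementary triangle of $\mathcal{T}\mathcal{L}$. Then the zero curvature condition \[ L(\mathfrak{e}_3,\lambda)L(\mathfrak{e}_2,\lambda)L(\mathfrak{e}_1,\lambda)=I \] is equivalent to the following set of equations: \begin{equation} f_1+f_2+f_3=0,\qquad g_1+g_2+g_3=0, \end{equation} and \begin{equation} f_1g_1=f_3g_2\quad\Leftrightarrow\quad f_2g_2=f_1g_3 \quad\Leftrightarrow\quad f_3g_3=f_2g_1, \end{equation} with the understanding that $h_k=(f_kg_k)^{-1}$, $k=1,2,3$.
   Context: $\mathcal{T}\mathcal{L}$ is the regular triangular lattice with vertices $k+\ell\omega+m\omega^2$ ($k,\ell,m\in\mathbb Z$, $\omega=e^{2\pi i/3}$) and edges between vertices at distance 1. Edges of the types $(\mathfrak{z},\mathfrak{z}+1)$, $(\mathfrak{z},\mathfrak{z}+\omega)$, $(\mathfrak{z},\mathfrak{z}+\omega^2)$ are declared positively oriented; with this, each elementary triangle (e.g. $(\mathfrak{z},\mathfrak{z}+\omega,\mathfrak{z}-1)$ or $(\mathfrak{z},\mathfrak{z}+\omega^2,\mathfrak{z}-1)$) has three consecutive positively oriented edges. To every positively oriented edge $\mathfrak{e}$ is attached a triple $(f,g,h)\in\mathbb C^3$ with $fgh=1$ and the matrix \[ L(\mathfrak{e},\lambda)=(1+\lambda^3)^{-1/3}\begin{pmatrix} 1 & \lambda f & 0 \\ 0 & 1 & \lambda g \\ \lambda h & 0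 & 1\end{pmatrix}, \] an element of the twisted loop group $\{L:\mathbb C\to SL(3,\mathbb C)\,|\,L(\omega\lambda)=\Omega L(\lambda)\Omega^{-1}\}$, $\Omega=\mathrm{diag}(1,\omega,\omega^2)$. Here $(f_k,g_k,h_k)$ is the triple attached to $\mathfrak{e}_k$. *)

theory Defs
  imports "HOL-Analysis.Analysis"
begin

definition nrm :: "complex \<Rightarrow> complex" where
  "nrm lam = (1 + lam ^ 3) powr (- 1 / 3)"

definition Lmat :: "complex \<Rightarrow> complex \<Rightarrow> complex \<Rightarrow> complex \<Rightarrow> complex ^ 3 ^ 3" where
  "Lmat f g h lam =
     (let c = nrm lam in
      vector [vector [c, c * lam * f, 0],
              vector [0, c, c * lam * g],
              vector [c * lam * h, 0, c]])"

end

theory Submission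
  imports Defs
begin

lemma nrm_cube: assumes "1 + lam^3 \<noteq> (0::complex)" shows "nrm lam ^ 3 * (1 + lam^3) = 1"
proof -
  have "nrm lam ^ 3 = exp (3 * ((- 1 / 3) * ln (1 + lam^3)))"
    unfolding nrm_def powr_def using assms by (simp add: exp_of_nat_mult[symmetric])
  also have "\<dots> = exp (- ln (1 + lam^3))" by simp
  also have "\<dots> = inverse (1 + lam^3)" using assms by (simp add: exp_minus)
  finally show ?thesis using assms by simp
qed

lemma prod_expl:
  "Lmat f3 g3 h3 lam ** Lmat f2 g2 h2 lam ** Lmat f1 g1 h1 lam =
   (let c = nrm lam in
    vector [vector [c^3 * (1 + lam^3 * f3*g2*h1), c^3 * lam * (f1+f2+f3), c^3 * lam^2 * (f3*g2+f3*g1+f2*g1)],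
            vector [c^3 * lam^2 * (g3*h2+g3*h1+g2*h1), c^3 * (1 + lam^3 * g3*h2*f1), c^3 * lam * (g1+g2+g3)],
            vector [c^3 * lam * (h1+h2+h3), c^3 * lam^2 * (h3*f2+h3*f1+h2*f1), c^3 * (1 + lam^3 * h3*f2*g1)]])"
  unfolding Lmat_def Let_def
  apply (simp add: vec_eq_iff forall_3 matrix_matrix_mult_def sum_3)
  apply (simp add: algebra_simps power3_eq_cube power2_eq_square)
  done
lemma vec_I: "(vector [vector [a11, a12, a13], vector [a21, a22, a23], vector [a31, a32, a33]] :: complex^3^3) = mat 1
  \<longleftrightarrow> a11 = 1 \<and> a12 = 0 \<and> a13 = 0 \<and> a21 = 0 \<and> a22 = 1 \<and> a23 = 0 \<and> a31 = 0 \<and> a32 = 0 \<and> a33 = 1"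
  by (simp add: vec_eq_iff forall_3 mat_def)

lemma alg:
  fixes f1 g1 h1 f2 g2 h2 f3 g3 h3 :: complex
  assumes h: "f1 * g1 * h1 = 1" "f2 * g2 * h2 = 1" "f3 * g3 * h3 = 1"
    and s: "f1 + f2 + f3 = 0" "g1 + g2 + g3 = 0" and r: "f1 * g1 = f3 * g2"
  shows "f2 * g2 = f1 * g3" "f3 * g3 = f2 * g1" "h1 + h2 + h3 = 0"
    "f3*g2+f3*g1+f2*g1 = 0" "g3*h2+g3*h1+g2*h1 = 0" "h3*f2+h3*f1+h2*f1 = 0"
    "f3*g2*h1 = 1" "g3*h2*f1 = 1" "h3*f2*g1 = 1"
proof -
  have f3: "f3 = - f1 - f2" and g2: "g2 = - g1 - g3" using s by (simp_all add: algebra_simps eq_neg_iff_add_eq_0)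
  have key: "f1*g3 + f2*g1 + f2*g3 = 0" using r unfolding f3 g2 by (simp add: algebra_simps)
  have "f2 * g2 - f1 * g3 = -(f1*g3 + f2*g1 + f2*g3)" unfolding g2 by (simp add: algebra_simps)
  then show e1: "f2 * g2 = f1 * g3" using key by simp
  have "f3 * g3 - f2 * g1 = -(f1*g3 + f2*g1 + f2*g3)" unfolding f3 by (simp add: algebra_simps)
  then show e2: "f3 * g3 = f2 * g1" using key by simp
  have nz: "f1 \<noteq> 0" "g1 \<noteq> 0" "f2 \<noteq> 0" "g2 \<noteq> 0" "f3 \<noteq> 0" "g3 \<noteq> 0" "h1 \<noteq> 0" "h2 \<noteq> 0" "h3 \<noteq> 0"
    using h by auto
  have H1: "h1 = 1 / (f1*g1)" and H2: "h2 = 1 / (f2*g2)" and H3: "h3 = 1/(f3*g3)"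
    using h nz by (simp_all add: field_simps)
  show c1: "f3*g2*h1 = 1" using r H1 nz by simp
  show c2: "g3*h2*f1 = 1" using e1 H2 nz by (simp add: field_simps)
  show c3: "h3*f2*g1 = 1" using e2 H3 nz by (simp add: field_simps)
  show "f3*g2+f3*g1+f2*g1 = 0" using e2 s by (simp add: algebra_simps f3 g2)
  show "h1 + h2 + h3 = 0"
  proof -
    have "h1 + h2 + h3 = 1/(f1*g1) + 1/(f1*g3) + 1/(f2*g1)" using H1 H2 H3 e1 e2 by simp
    also have "\<dots> = (f2*g3 + f2*g1 + f1*g3) / (f1*g1*f2*g3)" using nz by (simp add: field_simps)
    also have "\<dots> = 0" using key by (simp add: algebra_simps)
    finally show ?thesis .
  qed
  show "g3*h2+g3*h1+g2*h1 = 0"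
  proof -
    have "g3*h2+g3*h1+g2*h1 = g3/(f1*g3) + g3/(f1*g1) + g2/(f1*g1)" using H1 H2 e1 by simp
    also have "\<dots> = (g1 + g3 + g2) / (f1*g1)" using nz by (simp add: field_simps)
    also have "\<dots> = 0" using s by (simp add: algebra_simps)
    finally show ?thesis .
  qed
  show "h3*f2+h3*f1+h2*f1 = 0"
  proof -
    have "h3*f2+h3*f1+h2*f1 = f2/(f2*g1) + f1/(f2*g1) + f1/(f1*g3)" using H3 H2 e1 e2 by simp
    also have "\<dots> = (f2*g3 + f1*g3 + f2*g1) / (f2*g1*g3)" using nz by (simp add: field_simps)
    also have "\<dots> = 0" using key by (simp add: algebra_simps)
    finally show ?thesis .
  qed
qed
lemma keyeq:
  fixes f1 g1 f2 g2 f3 g3 :: complex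
  assumes s: "f1 + f2 + f3 = 0" "g1 + g2 + g3 = 0"
  shows "f1 * g1 - f3 * g2 = -(f1*g3 + f2*g1 + f2*g3)" "f2 * g2 - f1 * g3 = -(f1*g3 + f2*g1 + f2*g3)"
        "f3 * g3 - f2 * g1 = -(f1*g3 + f2*g1 + f2*g3)"
proof -
  have f3: "f3 = - f1 - f2" and g2: "g2 = - g1 - g3" using s by (simp_all add: algebra_simps eq_neg_iff_add_eq_0)
  show "f1 * g1 - f3 * g2 = -(f1*g3 + f2*g1 + f2*g3)" "f2 * g2 - f1 * g3 = -(f1*g3 + f2*g1 + f2*g3)"
        "f3 * g3 - f2 * g1 = -(f1*g3 + f2*g1 + f2*g3)" unfolding f3 g2 by (simp_all add: algebra_simps)
qed

theorem theorem7:
  fixes f1 g1 h1 f2 g2 h2 f3 g3 h3 :: complex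
  assumes "f1 * g1 * h1 = 1" and "f2 * g2 * h2 = 1" and "f3 * g3 * h3 = 1"
  defines "ZC \<equiv> (\<forall>lam::complex. 1 + lam ^ 3 \<noteq> 0 \<longrightarrow>
              Lmat f3 g3 h3 lam ** Lmat f2 g2 h2 lam ** Lmat f1 g1 h1 lam = mat 1)"
  shows "(ZC \<longleftrightarrow> f1 + f2 + f3 = 0 \<and> g1 + g2 + g3 = 0 \<and> f1 * g1 = f3 * g2)
       \<and> (ZC \<longleftrightarrow> f1 + f2 + f3 = 0 \<and> g1 + g2 + g3 = 0 \<and> f2 * g2 = f1 * g3)
       \<and> (ZC \<longleftrightarrow> f1 + f2 + f3 = 0 \<and> g1 + g2 + g3 = 0 \<and> f3 * g3 = f2 * g1)"
proof -
  have main: "ZC \<longleftrightarrow> f1 + f2 + f3 = 0 \<and> g1 + g2 + g3 = 0 \<and> f1 * g1 = f3 * g2"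
  proof
    assume Z: ZC
    have ne: "1 + (1::complex) ^ 3 \<noteq> 0" by simp
    have M: "Lmat f3 g3 h3 1 ** Lmat f2 g2 h2 1 ** Lmat f1 g1 h1 1 = mat 1"
      using Z ne unfolding ZC_def by blast
    define k where "k = nrm 1 ^ 3"
    have k: "k * 2 = 1" using nrm_cube[OF ne] unfolding k_def by simp
    then have knz: "k \<noteq> 0" by auto
    have E: "k * (1 + f3*g2*h1) = 1" "k * (f1+f2+f3) = 0" "k * (g1+g2+g3) = 0"
      using M unfolding prod_expl Let_def vec_I k_def by simp_all
    have "1 + f3*g2*h1 = 2" using E(1) k knz by (metis mult_left_cancel)
    then have c: "f3*g2*h1 = 1" by (metis add_diff_cancel_left' one_add_one)
    have "f3 * g2 = f3 * g2 * (f1 * g1 * h1)" using assms(1) by simp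
    also have "\<dots> = f1 * g1 * (f3*g2*h1)" by (simp add: algebra_simps)
    also have "\<dots> = f1 * g1" using c by simp
    finally show "f1 + f2 + f3 = 0 \<and> g1 + g2 + g3 = 0 \<and> f1 * g1 = f3 * g2"
      using E knz by simp
  next
    assume A: "f1 + f2 + f3 = 0 \<and> g1 + g2 + g3 = 0 \<and> f1 * g1 = f3 * g2"
        have F: "h1 + h2 + h3 = 0"
      "f3*g2+f3*g1+f2*g1 = 0" "g3*h2+g3*h1+g2*h1 = 0" "h3*f2+h3*f1+h2*f1 = 0"
      "f3*g2*h1 = 1" "g3*h2*f1 = 1" "h3*f2*g1 = 1"
      using alg[OF assms(1-3) conjunct1[OF A] conjunct1[OF conjunct2[OF A]] conjunct2[OF conjunct2[OF A]]] by simp_all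
    show ZC unfolding ZC_def
    proof (intro allI impI)
      fix lam :: complex assume ne: "1 + lam ^ 3 \<noteq> 0"
      have k: "nrm lam ^ 3 * (1 + lam ^ 3) = 1" by (rule nrm_cube[OF ne])
      have F2: "lam ^ 3 * f3 * g2 * h1 = lam ^ 3" "lam ^ 3 * g3 * h2 * f1 = lam ^ 3" "lam ^ 3 * h3 * f2 * g1 = lam ^ 3"
        using F(5-7) by (simp_all add: mult.assoc)
      show "Lmat f3 g3 h3 lam ** Lmat f2 g2 h2 lam ** Lmat f1 g1 h1 lam = mat 1"
        unfolding prod_expl Let_def vec_I
      proof (intro conjI)
        show "nrm lam ^ 3 * (1 + lam ^ 3 * f3 * g2 * h1) = 1" using F(5) k by (simp add: mult.assoc)
        show "nrm lam ^ 3 * (1 + lam ^ 3 * g3 * h2 * f1) = 1" using F(6) k by (simp add: mult.assoc)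
        show "nrm lam ^ 3 * (1 + lam ^ 3 * h3 * f2 * g1) = 1" using F(7) k by (simp add: mult.assoc)
        show "nrm lam ^ 3 * lam * (f1 + f2 + f3) = 0" using A by simp
        show "nrm lam ^ 3 * lam * (g1 + g2 + g3) = 0" using A by simp
        show "nrm lam ^ 3 * lam * (h1 + h2 + h3) = 0" using F(1) by simp
        show "nrm lam ^ 3 * lam\<^sup>2 * (f3 * g2 + f3 * g1 + f2 * g1) = 0" using F(2) by simp
        show "nrm lam ^ 3 * lam\<^sup>2 * (g3 * h2 + g3 * h1 + g2 * h1) = 0" using F(3) by simp
        show "nrm lam ^ 3 * lam\<^sup>2 * (h3 * f2 + h3 * f1 + h2 * f1) = 0" using F(4) by simp
      qed
    qed
  qed
  have K: "f1 + f2 + f3 = 0 \<and> g1 + g2 + g3 = 0 \<Longrightarrow>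
     (f1 * g1 = f3 * g2 \<longleftrightarrow> f2 * g2 = f1 * g3) \<and> (f1 * g1 = f3 * g2 \<longleftrightarrow> f3 * g3 = f2 * g1)"
    using keyeq[of f1 f2 f3 g1 g2 g3] by (metis eq_iff_diff_eq_0)
  show ?thesis using main K by blast
qed
end
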